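(* For each $0\ne a\in\mathbb{R}$, the translation operator $T_a:C^\infty(\mathbb{R},\mathbb{R})\to C^\infty(\mathbb{R},\mathbb{R})$, $T_a(f)(x)=f(x+a)$, is weakly mixing but does not support a hypercyclic algebra.
   Context: $C^\infty(\mathbb{R},\mathbb{R})$ is the Fréchet algebra (pointwise operations) of real-valued smooth functions on $\mathbb{R}$ with seminorms $p_k(f)=\max_{0\le j\le k}\max_{t\in[-k,k]}|f^{(j)}(t)|$. An operator $T$ is weakly mixing if $T\oplus T$ is topologically transitive (equivalently hypercyclic) on $X\times X$. $T$ supports a hypercyclic algebra if there is a subalgebra $A\ne\{0\}$ all of whose nonzero elements $f$ have dense orbit $\{T^nf:n\ge0\}$. *)

theory Defs
  imports "HOL-Analysis.Analysis"
begin

definition smooth :: "(real \<Rightarrow> real) \<Rightarrow> bool" where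
  "smooth f \<longleftrightarrow> (\<forall>k x. ((deriv ^^ k) f) differentiable (at x))"

definition Cinf :: "(real \<Rightarrow> real) set" where
  "Cinf = {f. smooth f}"

definition seminorm_p :: "nat \<Rightarrow> (real \<Rightarrow> real) \<Rightarrow> real" where
  "seminorm_p k f = (MAX j\<in>{0..k}. (SUP t\<in>{-real k..real k}. \<bar>(deriv ^^ j) f t\<bar>))"

definition Cinf_open :: "(real \<Rightarrow> real) set \<Rightarrow> bool" where
  "Cinf_open U \<longleftrightarrow> U \<subseteq> Cinf \<and>
     (\<forall>f\<in>U. \<exists>k \<epsilon>. \<epsilon> > 0 \<and> {g\<in>Cinf. seminorm_p k (\<lambda>x. g x - f x) < \<epsilon>} \<subseteq> U)"

definition transl :: "real \<Rightarrow> (real \<Rightarrow> real) \<Rightarrow> (real \<Rightarrow> real)" where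
  "transl a f = (\<lambda>x. f (x + a))"

definition hypercyclic_vector :: "((real \<Rightarrow> real) \<Rightarrow> (real \<Rightarrow> real)) \<Rightarrow> (real \<Rightarrow> real) \<Rightarrow> bool" where
  "hypercyclic_vector T f \<longleftrightarrow> f \<in> Cinf \<and>
     (\<forall>V. Cinf_open V \<and> V \<noteq> {} \<longrightarrow> (\<exists>n. (T ^^ n) f \<in> V))"

text \<open>Weak mixing: T \<oplus> T topologically transitive on X \<times> X (product opens contain
  products of opens, so it suffices to test on products of nonempty open sets).\<close>
definition weakly_mixing :: "((real \<Rightarrow> real) \<Rightarrow> (real \<Rightarrow> real)) \<Rightarrow> bool" where
  "weakly_mixing T \<longleftrightarrow>
     (\<forall>U1 U2 V1 V2. Cinf_open U1 \<and> Cinf_open U2 \<and> Cinf_open V1 \<and> Cinf_open V2 \<and>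
        U1 \<noteq> {} \<and> U2 \<noteq> {} \<and> V1 \<noteq> {} \<and> V2 \<noteq> {} \<longrightarrow>
        (\<exists>n. (T ^^ n) ` U1 \<inter> V1 \<noteq> {} \<and> (T ^^ n) ` U2 \<inter> V2 \<noteq> {}))"

definition Cinf_subalgebra :: "(real \<Rightarrow> real) set \<Rightarrow> bool" where
  "Cinf_subalgebra A \<longleftrightarrow> A \<subseteq> Cinf \<and> (\<lambda>x. 0) \<in> A \<and>
     (\<forall>f\<in>A. \<forall>g\<in>A. (\<lambda>x. f x + g x) \<in> A \<and> (\<lambda>x. f x * g x) \<in> A) \<and>
     (\<forall>c. \<forall>f\<in>A. (\<lambda>x. c * f x) \<in> A)"

definition supports_hypercyclic_algebra :: "((real \<Rightarrow> real) \<Rightarrow> (real \<Rightarrow> real)) \<Rightarrow> bool" where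
  "supports_hypercyclic_algebra T \<longleftrightarrow>
     (\<exists>A. Cinf_subalgebra A \<and> A \<noteq> {\<lambda>x. 0} \<and> (\<forall>f\<in>A. f \<noteq> (\<lambda>x. 0) \<longrightarrow> hypercyclic_vector T f))"

end

theory Submission
  imports Defs "HOL-Computational_Algebra.Polynomial"
begin


definition ck :: "nat \<Rightarrow> (real \<Rightarrow> real) \<Rightarrow> bool" where
  "ck k f \<longleftrightarrow> (\<forall>j\<le>k. \<forall>x. ((deriv ^^ j) f) differentiable (at x))"

lemma ck_0: "ck 0 f \<longleftrightarrow> (\<forall>x. f differentiable (at x))"
  by (simp add: ck_def)

lemma ck_Suc: "ck (Suc k) f \<longleftrightarrow> (\<forall>x. f differentiable (at x)) \<and> ck k (deriv f)"
proof
  assume H: "ck (Suc k) f"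
  show "(\<forall>x. f differentiable (at x)) \<and> ck k (deriv f)"
  proof
    show "\<forall>x. f differentiable (at x)" using H[unfolded ck_def, rule_format, of 0] by simp
    show "ck k (deriv f)" unfolding ck_def
    proof (intro allI impI)
      fix j x assume "j \<le> k"
      then have "(deriv ^^ Suc j) f differentiable (at x)" using H unfolding ck_def by auto
      then show "(deriv ^^ j) (deriv f) differentiable (at x)" by (simp add: funpow_Suc_right del: funpow.simps)
    qed
  qed
next
  assume H: "(\<forall>x. f differentiable (at x)) \<and> ck k (deriv f)"
  show "ck (Suc k) f" unfolding ck_def
  proof (intro allI impI)
    fix j x assume j: "j \<le> Suc k"
    show "(deriv ^^ j) f differentiable (at x)"
    proof (cases j)
      case 0 then show ?thesis using H by simp
    next
      case (Suc i)
      then have "(deriv ^^ i) (deriv f) differentiable (at x)" using H j unfolding ck_def by auto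
      then show ?thesis using Suc by (simp add: funpow_Suc_right del: funpow.simps)
    qed
  qed
qed

lemma ck_mono: "ck (Suc k) f \<Longrightarrow> ck k f"
  by (simp add: ck_def)

lemma ck_le: "ck k f \<Longrightarrow> j \<le> k \<Longrightarrow> ck j f"
  by (simp add: ck_def)

lemma diff_DERIV: "f differentiable (at x) \<Longrightarrow> (f has_real_derivative deriv f x) (at x)"
  using DERIV_deriv_iff_real_differentiable by blast

lemma ck_const: "ck k (\<lambda>x. c)"
proof (induction k arbitrary: c)
  case 0 then show ?case by (simp add: ck_0)
next
  case (Suc k)
  have "deriv (\<lambda>x. c) = (\<lambda>x. 0)" by (rule ext) simp
  then show ?case using Suc[of 0] by (simp add: ck_Suc)
qed

lemma ck_add: "ck k f \<Longrightarrow> ck k g \<Longrightarrow> ck k (\<lambda>x. f x + g x)"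
proof (induction k arbitrary: f g)
  case 0 then show ?case by (simp add: ck_0)
next
  case (Suc k)
  have df: "\<forall>x. f differentiable (at x)" and dg: "\<forall>x. g differentiable (at x)"
    using Suc.prems by (auto simp: ck_Suc)
  have "deriv (\<lambda>x. f x + g x) = (\<lambda>x. deriv f x + deriv g x)"
  proof
    fix x show "deriv (\<lambda>x. f x + g x) x = deriv f x + deriv g x"
      by (intro DERIV_imp_deriv derivative_intros diff_DERIV) (use df dg in auto)
  qed
  moreover have "ck k (\<lambda>x. deriv f x + deriv g x)"
    using Suc.IH Suc.prems by (auto simp: ck_Suc)
  ultimately show ?case using df dg by (simp add: ck_Suc)
qed

lemma ck_mult: "ck k f \<Longrightarrow> ck k g \<Longrightarrow> ck k (\<lambda>x. f x * g x)"
proof (induction k arbitrary: f g)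
  case 0 then show ?case by (simp add: ck_0)
next
  case (Suc k)
  have df: "\<forall>x. f differentiable (at x)" and dg: "\<forall>x. g differentiable (at x)"
    using Suc.prems by (auto simp: ck_Suc)
  have "deriv (\<lambda>x. f x * g x) = (\<lambda>x. deriv f x * g x + f x * deriv g x)"
  proof
    fix x show "deriv (\<lambda>x. f x * g x) x = deriv f x * g x + f x * deriv g x"
      by (rule DERIV_imp_deriv, rule DERIV_cong[OF DERIV_mult'[OF diff_DERIV diff_DERIV]]) (use df dg in auto)
  qed
  moreover have "ck k (\<lambda>x. deriv f x * g x + f x * deriv g x)"
    using Suc.IH Suc.prems ck_mono by (intro ck_add) (auto simp: ck_Suc)
  ultimately show ?case using df dg by (simp add: ck_Suc)
qed

lemma ck_cmult: "ck k f \<Longrightarrow> ck k (\<lambda>x. c * f x)"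
  using ck_mult[OF ck_const] by blast

lemma ck_diff: "ck k f \<Longrightarrow> ck k g \<Longrightarrow> ck k (\<lambda>x. f x - g x)"
  using ck_add[OF _ ck_cmult[of k g "-1"], of f] by simp

lemma ck_affine: "ck k f \<Longrightarrow> ck k (\<lambda>x. f (s * x + d))"
proof (induction k arbitrary: f)
  case 0
  have D: "((\<lambda>x. f (s * x + d)) has_real_derivative deriv f (s * x + d) * s) (at x)" for x
    by (rule DERIV_chain2[OF diff_DERIV]) (use 0 in \<open>auto simp: ck_0 intro!: derivative_eq_intros\<close>)
  then show ?case unfolding ck_0 using real_differentiable_def by blast
next
  case (Suc k)
  have df: "\<forall>x. f differentiable (at x)"
    using Suc.prems by (auto simp: ck_Suc)
  have D: "((\<lambda>x. f (s * x + d)) has_real_derivative deriv f (s * x + d) * s) (at x)" for x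
    by (rule DERIV_chain2[OF diff_DERIV]) (use df in \<open>auto intro!: derivative_eq_intros\<close>)
  have "deriv (\<lambda>x. f (s * x + d)) = (\<lambda>x. s * deriv f (s * x + d))"
    using DERIV_imp_deriv[OF D] by (auto simp: mult.commute)
  moreover have "ck k (\<lambda>x. s * deriv f (s * x + d))"
    using Suc.IH Suc.prems by (intro ck_cmult) (auto simp: ck_Suc)
  moreover have "\<forall>x. (\<lambda>x. f (s * x + d)) differentiable (at x)"
    using D real_differentiable_def by blast
  ultimately show ?case by (simp add: ck_Suc)
qed

lemma ck_inverse: "ck k f \<Longrightarrow> (\<forall>x. f x \<noteq> 0) \<Longrightarrow> ck k (\<lambda>x. inverse (f x))"
proof (induction k arbitrary: f)
  case 0
  have "((\<lambda>x. inverse (f x)) has_real_derivative - (deriv f x * inverse (f x ^ Suc (Suc 0)))) (at x)" for x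
    by (rule DERIV_inverse_fun[OF diff_DERIV]) (use 0 in \<open>auto simp: ck_0\<close>)
  then show ?case unfolding ck_0 using real_differentiable_def by blast
next
  case (Suc k)
  have df: "\<forall>x. f differentiable (at x)"
    using Suc.prems by (auto simp: ck_Suc)
  have D: "((\<lambda>x. inverse (f x)) has_real_derivative - (deriv f x * (inverse (f x) * inverse (f x)))) (at x)" for x
    using DERIV_inverse_fun[OF diff_DERIV, of f x] df Suc.prems(2)
    by (simp add: power2_eq_square)
  have "deriv (\<lambda>x. inverse (f x)) = (\<lambda>x. - (deriv f x * (inverse (f x) * inverse (f x))))"
    using DERIV_imp_deriv[OF D] by auto
  moreover have "ck k (\<lambda>x. - (deriv f x * (inverse (f x) * inverse (f x))))"
  proof -
    have i: "ck k (\<lambda>x. inverse (f x))" using Suc ck_mono by blast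
    have "ck k (\<lambda>x. (-1) * (deriv f x * (inverse (f x) * inverse (f x))))"
      using Suc.prems i by (intro ck_cmult ck_mult) (auto simp: ck_Suc)
    then show ?thesis by simp
  qed
  moreover have "\<forall>x. (\<lambda>x. inverse (f x)) differentiable (at x)"
    using D real_differentiable_def by blast
  ultimately show ?case by (simp add: ck_Suc)
qed



lemma poly_exp_lim: "((\<lambda>y. poly R y * exp (- y)) \<longlongrightarrow> (0::real)) at_top"
proof -
  have "((\<lambda>y. \<Sum>i\<le>degree R. coeff R i * (y ^ i / exp y)) \<longlongrightarrow> (0::real)) at_top"
    by (intro tendsto_null_sum tendsto_mult_right_zero tendsto_power_div_exp_0)
  moreover have "(\<Sum>i\<le>degree R. coeff R i * (y ^ i / exp y)) = poly R y * exp (- y)" for y :: real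
    by (simp add: poly_altdef sum_distrib_right exp_minus divide_inverse mult.assoc)
  ultimately show ?thesis by simp
qed

definition phiP :: "real poly \<Rightarrow> real \<Rightarrow> real" where
  "phiP P x = (if 0 < x then poly P (inverse x) * exp (- inverse x) else 0)"

definition QP :: "real poly \<Rightarrow> real poly" where
  "QP P = [:0,0,1:] * (P - pderiv P)"

lemma phiP_DERIV: "(phiP P has_real_derivative phiP (QP P) x) (at x)"
proof (cases "0 < x")
  case True
  have D: "((\<lambda>x. poly P (inverse x) * exp (- inverse x)) has_real_derivative
     poly (pderiv P) (inverse x) * (- inverse (x^2)) * exp (- inverse x)
     + poly P (inverse x) * (exp (- inverse x) * inverse (x^2))) (at x)"
    using True
    by (auto intro!: derivative_eq_intros DERIV_chain2[OF poly_DERIV] simp: power2_eq_square)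
  have "poly (pderiv P) (inverse x) * (- inverse (x^2)) * exp (- inverse x)
     + poly P (inverse x) * (exp (- inverse x) * inverse (x^2)) = phiP (QP P) x"
    using True by (simp add: phiP_def QP_def algebra_simps power2_eq_square)
  with D have D': "((\<lambda>x. poly P (inverse x) * exp (- inverse x)) has_real_derivative phiP (QP P) x) (at x)"
    by simp
  show ?thesis
    by (rule has_field_derivative_transform_within_open[OF D', of "{0<..}"]) (use True in \<open>auto simp: phiP_def\<close>)
next
  case False
  show ?thesis
  proof (cases "x < 0")
    case True
    have D: "((\<lambda>x. 0) has_real_derivative phiP (QP P) x) (at x)"
      using True by (simp add: phiP_def)
    show ?thesis
      by (rule has_field_derivative_transform_within_open[OF D, of "{..<0}"]) (use True in \<open>auto simp: phiP_def\<close>)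
  next
    case False
    with \<open>\<not> 0 < x\<close> have x0: "x = 0" by simp
    have L: "((\<lambda>h. (phiP P (0 + h) - phiP P 0) / h) \<longlongrightarrow> 0) (at_left 0)"
    proof (rule tendsto_eventually)
      show "\<forall>\<^sub>F h in at_left 0. (phiP P (0 + h) - phiP P 0) / h = 0"
        using eventually_at_left_real[of "-1" "0::real"]
        by (rule eventually_mono) (auto simp: phiP_def)
    qed
    have R: "((\<lambda>h. (phiP P (0 + h) - phiP P 0) / h) \<longlongrightarrow> 0) (at_right 0)"
      unfolding filterlim_at_right_to_top
    proof -
      have "((\<lambda>y. poly (P * [:0,1:]) y * exp (- y)) \<longlongrightarrow> (0::real)) at_top"
        by (rule poly_exp_lim)
      moreover have "\<forall>\<^sub>F y in at_top. poly (P * [:0,1:]) y * exp (- y) = (phiP P (0 + inverse y) - phiP P 0) / inverse y"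
        using eventually_gt_at_top[of "0::real"]
        by (rule eventually_mono) (auto simp: phiP_def field_simps)
      ultimately show "((\<lambda>y. (phiP P (0 + inverse y) - phiP P 0) / inverse y) \<longlongrightarrow> 0) at_top"
        using tendsto_cong by fastforce
    qed
    have "(phiP P has_real_derivative 0) (at 0)"
      unfolding DERIV_def using L R filterlim_at_split by blast
    then show ?thesis using x0 by (simp add: phiP_def)
  qed
qed

lemma ck_phiP: "ck k (phiP P)"
proof (induction k arbitrary: P)
  case 0 then show ?case using phiP_DERIV real_differentiable_def ck_0 by blast
next
  case (Suc k)
  have "deriv (phiP P) = phiP (QP P)"
    using phiP_DERIV DERIV_imp_deriv by blast
  then show ?case using Suc phiP_DERIV real_differentiable_def ck_Suc by metis
qed

definition psi :: "real \<Rightarrow> real" where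
  "psi x = (if 0 < x then exp (- inverse x) else 0)"

lemma psi_phiP: "psi = phiP 1"
  by (rule ext) (simp add: psi_def phiP_def)

lemma ck_psi: "ck k psi"
  unfolding psi_phiP by (rule ck_phiP)

definition stp :: "real \<Rightarrow> real" where
  "stp x = psi x * inverse (psi x + psi (1 - x))"

lemma psi_nonneg: "psi x \<ge> 0" by (simp add: psi_def)
lemma psi_pos: "0 < x \<Longrightarrow> psi x > 0" by (simp add: psi_def)

lemma stp_den: "psi x + psi (1 - x) \<noteq> 0"
proof (cases "0 < x")
  case True then show ?thesis using psi_pos[of x] psi_nonneg[of "1-x"] by linarith
next
  case False then show ?thesis using psi_pos[of "1-x"] psi_nonneg[of x] by linarith
qed

lemma ck_stp: "ck k stp"
proof -
  have "ck k (\<lambda>x. psi ((-1) * x + 1))" by (rule ck_affine[OF ck_psi])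
  then have "ck k (\<lambda>x. psi x + psi (1 - x))" using ck_add[OF ck_psi] by simp
  then have "ck k (\<lambda>x. inverse (psi x + psi (1 - x)))" using ck_inverse stp_den by blast
  then show ?thesis unfolding stp_def[abs_def] using ck_mult[OF ck_psi] by blast
qed

lemma stp_0: "x \<le> 0 \<Longrightarrow> stp x = 0" by (simp add: stp_def psi_def)
lemma stp_1: "1 \<le> x \<Longrightarrow> stp x = 1"
  using psi_pos[of x] by (simp add: stp_def psi_def[of "1-x"])



lemma smooth_ck: "smooth f \<longleftrightarrow> (\<forall>k. ck k f)"
  unfolding smooth_def ck_def by blast

lemma Cinf_ck: "f \<in> Cinf \<longleftrightarrow> (\<forall>k. ck k f)"
  by (simp add: Cinf_def smooth_ck)

lemma transl_pow: "(transl a ^^ n) h = (\<lambda>x. h (x + real n * a))"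
proof (induction n)
  case 0 then show ?case by simp
next
  case (Suc n) then show ?case by (simp add: transl_def algebra_simps)
qed

lemma deriv_pow_zero: "(deriv ^^ j) (\<lambda>x::real. 0::real) = (\<lambda>x. 0)"
proof (induction j)
  case 0 then show ?case by simp
next
  case (Suc j)
  have "deriv (\<lambda>x::real. 0::real) = (\<lambda>x. 0)" by (rule ext) simp
  then show ?case using Suc by simp
qed

lemma seminorm_zero:
  assumes "\<forall>j\<le>k. \<forall>t. \<bar>t\<bar> \<le> real k \<longrightarrow> (deriv ^^ j) F t = 0"
  shows "seminorm_p k F = 0"
proof -
  have S: "(SUP t\<in>{-real k..real k}. \<bar>(deriv ^^ j) F t\<bar>) = 0" if "j \<in> {0..k}" for j
  proof -
    have "(SUP t\<in>{-real k..real k}. \<bar>(deriv ^^ j) F t\<bar>) = (SUP t\<in>{-real k..real k}. (0::real))"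
      using assms that by (intro SUP_cong) auto
    also have "\<dots> = 0" by (rule cSUP_const) simp
    finally show ?thesis .
  qed
  have "seminorm_p k F = Max ((\<lambda>j. 0::real) ` {0..k})"
    unfolding seminorm_p_def using S by (metis (no_types, lifting) image_cong)
  also have "\<dots> = 0" by simp
  finally show ?thesis .
qed

lemma seminorm_p0: "seminorm_p 0 F = \<bar>F 0\<bar>"
  by (simp add: seminorm_p_def)

lemma eventually_nhds_less:
  fixes c L t :: real
  assumes "c * t < L"
  shows "\<forall>\<^sub>F x in nhds t. c * x < L"
proof -
  have "open {x::real. c * x < L}" by (intro open_Collect_less continuous_intros)
  then show ?thesis using eventually_nhds_in_open[of "{x::real. c * x < L}" t] assms by simp
qed

lemma glue:
  fixes a K :: real and n :: nat
  assumes a: "a \<noteq> 0" and f: "f \<in> Cinf" and g: "g \<in> Cinf" and K: "2 * K + 3 \<le> real n * \<bar>a\<bar>"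
  shows "\<exists>h. h \<in> Cinf \<and> (transl a ^^ n) h \<in> Cinf \<and>
     (\<forall>j t. \<bar>t\<bar> \<le> K \<longrightarrow> (deriv ^^ j) (\<lambda>x. h x - f x) t = 0) \<and>
     (\<forall>j t. \<bar>t\<bar> \<le> K \<longrightarrow> (deriv ^^ j) (\<lambda>x. (transl a ^^ n) h x - g x) t = 0)"
proof -
  obtain c :: real where c: "c = 1 \<or> c = -1" and ca: "c * a = \<bar>a\<bar>"
    by (cases "a > 0") (auto intro: that[of 1] that[of "-1"])
  define L where "L = K + 1"
  define h where "h x = f x + stp (c * x + - L) * (g (1 * x + - (real n * a)) - f x)" for x
  have ckh: "ck k h" for k
  proof -
    have "ck k (\<lambda>x. stp (c * x + - L))" by (rule ck_affine[OF ck_stp])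
    moreover have "ck k (\<lambda>x. g (1 * x + - (real n * a)))" using g by (intro ck_affine) (simp add: Cinf_ck)
    ultimately show ?thesis unfolding h_def[abs_def] using f
      by (intro ck_add ck_mult ck_diff) (auto simp: Cinf_ck)
  qed
  have hC: "h \<in> Cinf" using ckh Cinf_ck by blast
  have TC: "(transl a ^^ n) h \<in> Cinf"
    unfolding transl_pow Cinf_ck using ck_affine[OF ckh, of _ 1 "real n * a"] by simp
  have P1: "(deriv ^^ j) (\<lambda>x. h x - f x) t = 0" if t: "\<bar>t\<bar> \<le> K" for j t
  proof -
    have "c * t < L" using c t unfolding L_def by auto
    then have ev: "\<forall>\<^sub>F x in nhds t. c * x < L" by (rule eventually_nhds_less)
    have "\<forall>\<^sub>F x in nhds t. h x - f x = 0"
      by (rule eventually_mono[OF ev]) (simp add: h_def stp_0)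
    then have "(deriv ^^ j) (\<lambda>x. h x - f x) t = (deriv ^^ j) (\<lambda>x. 0) t"
      by (rule higher_deriv_cong_ev) simp
    then show ?thesis by (simp add: deriv_pow_zero)
  qed
  have P2: "(deriv ^^ j) (\<lambda>x. (transl a ^^ n) h x - g x) t = 0" if t: "\<bar>t\<bar> \<le> K" for j t
  proof -
    have "(-c) * t < - (L + 1) + real n * \<bar>a\<bar>" using c t K unfolding L_def by auto
    then have ev: "\<forall>\<^sub>F x in nhds t. (-c) * x < - (L + 1) + real n * \<bar>a\<bar>" by (rule eventually_nhds_less)
    have "\<forall>\<^sub>F x in nhds t. (transl a ^^ n) h x - g x = 0"
    proof (rule eventually_mono[OF ev])
      fix x assume x: "(-c) * x < - (L + 1) + real n * \<bar>a\<bar>"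
      have "c * (x + real n * a) + - L = c * x + real n * (c * a) - L" by (simp add: algebra_simps)
      also have "\<dots> \<ge> 1" using x ca by simp
      finally have "stp (c * (x + real n * a) + - L) = 1" by (rule stp_1)
      then show "(transl a ^^ n) h x - g x = 0" by (simp add: transl_pow h_def)
    qed
    then have "(deriv ^^ j) (\<lambda>x. (transl a ^^ n) h x - g x) t = (deriv ^^ j) (\<lambda>x. 0) t"
      by (rule higher_deriv_cong_ev) simp
    then show ?thesis by (simp add: deriv_pow_zero)
  qed
  show ?thesis using hC TC P1 P2 by blast
qed

lemma weakly_mixing_transl:
  assumes a: "a \<noteq> 0"
  shows "weakly_mixing (transl a)"
  unfolding weakly_mixing_def
proof (intro allI impI)
  fix U1 U2 V1 V2 :: "(real \<Rightarrow> real) set"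
  assume H: "Cinf_open U1 \<and> Cinf_open U2 \<and> Cinf_open V1 \<and> Cinf_open V2 \<and>
        U1 \<noteq> {} \<and> U2 \<noteq> {} \<and> V1 \<noteq> {} \<and> V2 \<noteq> {}"
  obtain f1 where f1: "f1 \<in> U1" using H by blast
  obtain f2 where f2: "f2 \<in> U2" using H by blast
  obtain g1 where g1: "g1 \<in> V1" using H by blast
  obtain g2 where g2: "g2 \<in> V2" using H by blast
  obtain k1 e1 where e1: "e1 > 0" and B1: "{g\<in>Cinf. seminorm_p k1 (\<lambda>x. g x - f1 x) < e1} \<subseteq> U1"
    using f1 H unfolding Cinf_open_def by (meson)
  obtain k2 e2 where e2: "e2 > 0" and B2: "{g\<in>Cinf. seminorm_p k2 (\<lambda>x. g x - f2 x) < e2} \<subseteq> U2"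
    using f2 H unfolding Cinf_open_def by (meson)
  obtain k3 e3 where e3: "e3 > 0" and B3: "{g\<in>Cinf. seminorm_p k3 (\<lambda>x. g x - g1 x) < e3} \<subseteq> V1"
    using g1 H unfolding Cinf_open_def by (meson)
  obtain k4 e4 where e4: "e4 > 0" and B4: "{g\<in>Cinf. seminorm_p k4 (\<lambda>x. g x - g2 x) < e4} \<subseteq> V2"
    using g2 H unfolding Cinf_open_def by (meson)
  have inC: "f1 \<in> Cinf" "f2 \<in> Cinf" "g1 \<in> Cinf" "g2 \<in> Cinf"
    using H f1 f2 g1 g2 unfolding Cinf_open_def by (meson subsetD)+
  define K where "K = real (max (max k1 k2) (max k3 k4))"
  obtain n :: nat where n: "(2 * K + 3) / \<bar>a\<bar> < real n" using reals_Archimedean2 by blast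
  have nK: "2 * K + 3 \<le> real n * \<bar>a\<bar>" using n a by (simp add: field_simps)
  have Z: "seminorm_p k F = 0" if "k \<le> max (max k1 k2) (max k3 k4)"
    and "\<forall>j t. \<bar>t\<bar> \<le> K \<longrightarrow> (deriv ^^ j) F t = 0" for k F
  proof (rule seminorm_zero, intro allI impI)
    fix j t assume "\<bar>t\<bar> \<le> real k"
    then have "\<bar>t\<bar> \<le> K" using that(1) unfolding K_def by linarith
    then show "(deriv ^^ j) F t = 0" using that(2) by blast
  qed
  obtain h1 where h1: "h1 \<in> Cinf" "(transl a ^^ n) h1 \<in> Cinf"
     "\<forall>j t. \<bar>t\<bar> \<le> K \<longrightarrow> (deriv ^^ j) (\<lambda>x. h1 x - f1 x) t = 0"
     "\<forall>j t. \<bar>t\<bar> \<le> K \<longrightarrow> (deriv ^^ j) (\<lambda>x. (transl a ^^ n) h1 x - g1 x) t = 0"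
    using glue[OF a inC(1) inC(3) nK] by blast
  obtain h2 where h2: "h2 \<in> Cinf" "(transl a ^^ n) h2 \<in> Cinf"
     "\<forall>j t. \<bar>t\<bar> \<le> K \<longrightarrow> (deriv ^^ j) (\<lambda>x. h2 x - f2 x) t = 0"
     "\<forall>j t. \<bar>t\<bar> \<le> K \<longrightarrow> (deriv ^^ j) (\<lambda>x. (transl a ^^ n) h2 x - g2 x) t = 0"
    using glue[OF a inC(2) inC(4) nK] by blast
  have "h1 \<in> U1" using B1 h1(1) Z[OF _ h1(3), of k1] e1 by auto
  moreover have "(transl a ^^ n) h1 \<in> V1" using B3 h1(2) Z[OF _ h1(4), of k3] e3 by auto
  moreover have "h2 \<in> U2" using B2 h2(1) Z[OF _ h2(3), of k2] e2 by auto
  moreover have "(transl a ^^ n) h2 \<in> V2" using B4 h2(2) Z[OF _ h2(4), of k4] e4 by auto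
  ultimately show "\<exists>n. (transl a ^^ n) ` U1 \<inter> V1 \<noteq> {} \<and> (transl a ^^ n) ` U2 \<inter> V2 \<noteq> {}"
    by blast
qed

lemma not_supports:
  shows "\<not> supports_hypercyclic_algebra (transl a)"
proof
  assume "supports_hypercyclic_algebra (transl a)"
  then obtain A where A: "Cinf_subalgebra A" "A \<noteq> {\<lambda>x. 0}"
    and HC: "\<forall>f\<in>A. f \<noteq> (\<lambda>x. 0) \<longrightarrow> hypercyclic_vector (transl a) f"
    unfolding supports_hypercyclic_algebra_def by blast
  have "(\<lambda>x. 0) \<in> A" using A(1) unfolding Cinf_subalgebra_def by blast
  then obtain f where f: "f \<in> A" "f \<noteq> (\<lambda>x. 0)" using A(2) by blast
  then obtain y where y: "f y \<noteq> 0" by auto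
  define F where "F = (\<lambda>x. f x * f x)"
  have FA: "F \<in> A" using A(1) f(1) unfolding Cinf_subalgebra_def F_def by blast
  have "F y \<noteq> 0" using y by (simp add: F_def)
  then have "F \<noteq> (\<lambda>x. 0)" by auto
  then have hv: "hypercyclic_vector (transl a) F" using HC FA by blast
  define V where "V = {g\<in>Cinf. \<bar>g 0 + 2\<bar> < 1}"
  have "Cinf_open V" unfolding Cinf_open_def
  proof (intro conjI ballI)
    show "V \<subseteq> Cinf" unfolding V_def by blast
    fix g assume g: "g \<in> V"
    show "\<exists>k \<epsilon>. \<epsilon> > 0 \<and> {h\<in>Cinf. seminorm_p k (\<lambda>x. h x - g x) < \<epsilon>} \<subseteq> V"
      by (rule exI[of _ 0], rule exI[of _ "1 - \<bar>g 0 + 2\<bar>"]) (use g in \<open>auto simp: V_def seminorm_p0\<close>)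
  qed
  moreover have "(\<lambda>x. -2) \<in> V" unfolding V_def Cinf_ck by (simp add: ck_const)
  ultimately obtain n where "(transl a ^^ n) F \<in> V"
    using hv unfolding hypercyclic_vector_def by blast
  then have "\<bar>f (real n * a) * f (real n * a) + 2\<bar> < 1"
    by (simp add: V_def transl_pow F_def)
  moreover have "f (real n * a) * f (real n * a) \<ge> 0" by simp
  ultimately show False by linarith
qed

theorem corollary17:
  fixes a :: real
  assumes "a \<noteq> 0"
  shows "weakly_mixing (transl a) \<and> \<not> supports_hypercyclic_algebra (transl a)"
  using weakly_mixing_transl[OF assms] not_supports by blast

end
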